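(* Let $H[A,B]$ be a connected bipartite cubic graph, $a\in A$, $b\in B$. Then $(a,b)$ is not $\lambda$-matchable if and only if exactly one of the following holds: (i) there is a unique edge joining $a$ and $b$, and it belongs to some $2$-cut of $H$; or (ii) $a$ and $b$ are nonadjacent and there is a tight cut $\partial(X)$ with $a\in X^-$ and $b\in\overline{X}^-$.
   Context: Graphs are loopless but may have parallel edges. For a connected bipartite cubic graph $H[A,B]$, $a\in A$, $b\in B$, an $(a,b)$-matching is a spanning subgraph in which $a,b$ have degree $3$ and every other vertex degree $1$; $(a,b)$ is $\lambda$-matchable if one exists. A cut $C$ is tight if $|C\cap M|=1$ for every perfect matching $M$. For an odd cut $\partial(X)$ of $H[A,B]$, $X^+$ and $X^-$ are the larger and smaller of $X\cap A$ and $X\cap B$; $\overline{X}^+,\overline{X}^-$ are defined analogously for $\overline{X}=V(H)-X$. A $2$-cut is a cut with exactly two edges. *)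

theory Defs
  imports Main
begin

text \<open>A (finite, loopless) multigraph: vertex set V, edge set E (edges are abstract
  objects, so parallel edges are allowed), and an endpoint map ends giving each edge
  a two-element set of vertices.\<close>

definition multigraph :: "'v set \<Rightarrow> 'e set \<Rightarrow> ('e \<Rightarrow> 'v set) \<Rightarrow> bool" where
  "multigraph V E ends \<longleftrightarrow> finite V \<and> finite E \<and>
     (\<forall>e\<in>E. ends e \<subseteq> V \<and> card (ends e) = 2)"

definition deg :: "'e set \<Rightarrow> ('e \<Rightarrow> 'v set) \<Rightarrow> 'v \<Rightarrow> nat" where
  "deg F ends v = card {e\<in>F. v \<in> ends e}"

definition adj_rel :: "'v set \<Rightarrow> 'e set \<Rightarrow> ('e \<Rightarrow> 'v set) \<Rightarrow> ('v \<times> 'v) set" where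
  "adj_rel V E ends = {(u, v). u \<in> V \<and> v \<in> V \<and> (\<exists>e\<in>E. ends e = {u, v})}"

definition connected_graph :: "'v set \<Rightarrow> 'e set \<Rightarrow> ('e \<Rightarrow> 'v set) \<Rightarrow> bool" where
  "connected_graph V E ends \<longleftrightarrow> V \<noteq> {} \<and>
     (\<forall>u\<in>V. \<forall>v\<in>V. (u, v) \<in> (adj_rel V E ends)\<^sup>*)"

definition cubic :: "'v set \<Rightarrow> 'e set \<Rightarrow> ('e \<Rightarrow> 'v set) \<Rightarrow> bool" where
  "cubic V E ends \<longleftrightarrow> (\<forall>v\<in>V. deg E ends v = 3)"

definition bipartite_on :: "'v set \<Rightarrow> 'e set \<Rightarrow> ('e \<Rightarrow> 'v set) \<Rightarrow> 'v set \<Rightarrow> 'v set \<Rightarrow> bool" where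
  "bipartite_on V E ends A B \<longleftrightarrow> A \<union> B = V \<and> A \<inter> B = {} \<and>
     (\<forall>e\<in>E. card (ends e \<inter> A) = 1 \<and> card (ends e \<inter> B) = 1)"

definition cut :: "'e set \<Rightarrow> ('e \<Rightarrow> 'v set) \<Rightarrow> 'v set \<Rightarrow> 'e set" where
  "cut E ends X = {e\<in>E. card (ends e \<inter> X) = 1}"

definition perfect_matching :: "'v set \<Rightarrow> 'e set \<Rightarrow> ('e \<Rightarrow> 'v set) \<Rightarrow> 'e set \<Rightarrow> bool" where
  "perfect_matching V E ends M \<longleftrightarrow> M \<subseteq> E \<and> (\<forall>v\<in>V. deg M ends v = 1)"

definition tight_cut :: "'v set \<Rightarrow> 'e set \<Rightarrow> ('e \<Rightarrow> 'v set) \<Rightarrow> 'e set \<Rightarrow> bool" where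
  "tight_cut V E ends C \<longleftrightarrow> (\<exists>X\<subseteq>V. C = cut E ends X) \<and>
     (\<forall>M. perfect_matching V E ends M \<longrightarrow> card (C \<inter> M) = 1)"

definition two_cut :: "'v set \<Rightarrow> 'e set \<Rightarrow> ('e \<Rightarrow> 'v set) \<Rightarrow> 'e set \<Rightarrow> bool" where
  "two_cut V E ends C \<longleftrightarrow> (\<exists>X\<subseteq>V. C = cut E ends X) \<and> card C = 2"

definition ab_matching :: "'v set \<Rightarrow> 'e set \<Rightarrow> ('e \<Rightarrow> 'v set) \<Rightarrow> 'v \<Rightarrow> 'v \<Rightarrow> 'e set \<Rightarrow> bool" where
  "ab_matching V E ends a b F \<longleftrightarrow> F \<subseteq> E \<and> deg F ends a = 3 \<and> deg F ends b = 3 \<and>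
     (\<forall>v\<in>V - {a, b}. deg F ends v = 1)"

definition lambda_matchable :: "'v set \<Rightarrow> 'e set \<Rightarrow> ('e \<Rightarrow> 'v set) \<Rightarrow> 'v \<Rightarrow> 'v \<Rightarrow> bool" where
  "lambda_matchable V E ends a b \<longleftrightarrow> (\<exists>F. ab_matching V E ends a b F)"

text \<open>For an odd cut \<open>\<partial>(X)\<close> in H[A,B]: \<open>X\<^sup>-\<close> is the smaller of \<open>X \<inter> A\<close>, \<open>X \<inter> B\<close>,
  \<open>X\<^sup>+\<close> the larger (well defined since |X| odd and |A| = |B|).\<close>
definition minus_side :: "'v set \<Rightarrow> 'v set \<Rightarrow> 'v set \<Rightarrow> 'v set" where
  "minus_side A B X = (if card (X \<inter> A) < card (X \<inter> B) then X \<inter> A else X \<inter> B)"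

definition plus_side :: "'v set \<Rightarrow> 'v set \<Rightarrow> 'v set \<Rightarrow> 'v set" where
  "plus_side A B X = (if card (X \<inter> A) < card (X \<inter> B) then X \<inter> B else X \<inter> A)"

end

theory Submission
  imports Defs
begin



lemma hall:
  fixes L :: "'a set" and N :: "'a \<Rightarrow> 'b set"
  assumes "finite L" "\<forall>x\<in>L. finite (N x)" "\<forall>T\<subseteq>L. card T \<le> card (\<Union>(N ` T))"
  shows "\<exists>f. inj_on f L \<and> (\<forall>x\<in>L. f x \<in> N x)"
  using assms
proof (induction "card L" arbitrary: L N rule: less_induct)
  case less
  show ?case
  proof (cases "L = {}")
    case True then show ?thesis by auto
  next
    case False
    show ?thesis
    proof (cases "\<exists>T. T \<subseteq> L \<and> T \<noteq> {} \<and> T \<noteq> L \<and> card T = card (\<Union>(N ` T))")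
      case True
      then obtain T where T: "T \<subseteq> L" "T \<noteq> {}" "T \<noteq> L" "card T = card (\<Union>(N ` T))" by blast
      have finT: "finite T" using T(1) less.prems(1) finite_subset by blast
      have "card T < card L" using T less.prems(1) by (meson psubsetI psubset_card_mono)
      moreover have "\<forall>x\<in>T. finite (N x)" using T(1) less.prems(2) by blast
      moreover have "\<forall>S\<subseteq>T. card S \<le> card (\<Union>(N ` S))" using T(1) less.prems(3) by blast
      ultimately obtain f1 where f1: "inj_on f1 T" "\<forall>x\<in>T. f1 x \<in> N x"
        using less.hyps[of T N] finT by blast
      define NT where "NT = \<Union>(N ` T)"
      have finNT: "finite NT" unfolding NT_def using finT \<open>\<forall>x\<in>T. finite (N x)\<close> by blast
      define N2 where "N2 = (\<lambda>x. N x - NT)"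
      have c2: "card (L - T) < card L"
      proof -
        have "card (L - T) = card L - card T" using finT T(1) by (simp add: card_Diff_subset)
        moreover have "card T > 0" using finT T(2) by auto
        moreover have "card T \<le> card L" using T(1) less.prems(1) by (simp add: card_mono)
        ultimately show ?thesis by linarith
      qed
      have hall2: "\<forall>S\<subseteq>L-T. card S \<le> card (\<Union>(N2 ` S))"
      proof (intro allI impI)
        fix S assume S: "S \<subseteq> L - T"
        have finS: "finite S" using S less.prems(1) finite_subset by blast
        have "S \<union> T \<subseteq> L" using S T(1) by blast
        then have "card (S \<union> T) \<le> card (\<Union>(N ` (S \<union> T)))" using less.prems(3) by blast
        moreover have "\<Union>(N ` (S \<union> T)) = \<Union>(N2 ` S) \<union> NT" by (auto simp: N2_def NT_def)
        moreover have "card (\<Union>(N2 ` S) \<union> NT) \<le> card (\<Union>(N2 ` S)) + card NT" by (rule card_Un_le)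
        moreover have "card (S \<union> T) = card S + card T" using S finS finT by (intro card_Un_disjoint) auto
        ultimately have "card S + card T \<le> card (\<Union>(N2 ` S)) + card NT" by (metis le_trans)
        then show "card S \<le> card (\<Union>(N2 ` S))" by (simp add: NT_def T(4)[symmetric])
      qed
      have "\<forall>x\<in>L-T. finite (N2 x)" using less.prems(2) by (auto simp: N2_def)
      then obtain f2 where f2: "inj_on f2 (L-T)" "\<forall>x\<in>L-T. f2 x \<in> N2 x"
        using less.hyps[of "L-T" N2] c2 hall2 less.prems(1) by blast
      define f where "f = (\<lambda>x. if x \<in> T then f1 x else f2 x)"
      have "inj_on f L"
        unfolding inj_on_def
      proof (intro ballI impI)
        fix x y assume xy: "x \<in> L" "y \<in> L" "f x = f y"
        show "x = y"
        proof (cases "x \<in> T"; cases "y \<in> T")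
          assume "x \<in> T" "y \<in> T" then show ?thesis using xy f1(1) by (auto simp: f_def inj_on_def)
        next
          assume "x \<notin> T" "y \<notin> T" then show ?thesis using xy f2(1) by (auto simp: f_def inj_on_def)
        next
          assume a: "x \<in> T" "y \<notin> T"
          then have "f x \<in> NT" using f1(2) by (auto simp: f_def NT_def)
          moreover have "y \<in> L - T" using a xy by blast
          then have "f y \<notin> NT" using f2(2) a by (simp add: f_def N2_def)
          ultimately show ?thesis using xy by simp
        next
          assume a: "x \<notin> T" "y \<in> T"
          then have "f y \<in> NT" using f1(2) by (auto simp: f_def NT_def)
          moreover have "x \<in> L - T" using a xy by blast
          then have "f x \<notin> NT" using f2(2) a by (simp add: f_def N2_def)
          ultimately show ?thesis using xy by simp
        qed
      qed
      moreover have "\<forall>x\<in>L. f x \<in> N x" using f1(2) f2(2) by (auto simp: f_def N2_def)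
      ultimately show ?thesis by blast
    next
      case False
      then have strict: "\<And>T. T \<subseteq> L \<Longrightarrow> T \<noteq> {} \<Longrightarrow> T \<noteq> L \<Longrightarrow> card T < card (\<Union>(N ` T))"
        using less.prems(3) by (meson le_neq_implies_less)
      obtain x where x: "x \<in> L" using \<open>L \<noteq> {}\<close> by blast
      have "card {x} \<le> card (\<Union>(N ` {x}))" using less.prems(3) x by blast
      then have "N x \<noteq> {}" by auto
      then obtain y where y: "y \<in> N x" by blast
      define N2 where "N2 = (\<lambda>z. N z - {y})"
      have c2: "card (L - {x}) < card L" using x less.prems(1) by (meson card_Diff1_less)
      have hall2: "\<forall>S\<subseteq>L-{x}. card S \<le> card (\<Union>(N2 ` S))"
      proof (intro allI impI)
        fix S assume S: "S \<subseteq> L - {x}"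
        show "card S \<le> card (\<Union>(N2 ` S))"
        proof (cases "S = {}")
          case True then show ?thesis by simp
        next
          case False
          have finS: "finite S" using S less.prems(1) finite_subset by blast
          have "S \<noteq> L" using S x by blast
          then have "card S < card (\<Union>(N ` S))" using strict S False by blast
          moreover have "\<Union>(N2 ` S) = \<Union>(N ` S) - {y}" by (auto simp: N2_def)
          moreover have "finite (\<Union>(N ` S))" using finS less.prems(2) S by blast
          moreover have "card (\<Union>(N ` S)) \<le> card (\<Union>(N ` S) - {y}) + 1"
            by (metis add.commute card_Diff1_le card_Diff_singleton_if le_refl plus_1_eq_Suc Suc_pred' card_gt_0_iff le_SucI  \<open>finite (\<Union>(N ` S))\<close> empty_iff)
          ultimately show ?thesis by simp
        qed
      qed
      have "\<forall>z\<in>L-{x}. finite (N2 z)" using less.prems(2) by (auto simp: N2_def)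
      then obtain f2 where f2: "inj_on f2 (L-{x})" "\<forall>z\<in>L-{x}. f2 z \<in> N2 z"
        using less.hyps[of "L-{x}" N2] c2 hall2 less.prems(1) by blast
      define f where "f = f2(x := y)"
      have "inj_on f L"
        unfolding inj_on_def
      proof (intro ballI impI)
        fix u v assume uv: "u \<in> L" "v \<in> L" "f u = f v"
        show "u = v"
        proof (cases "u = x"; cases "v = x")
          assume "u \<noteq> x" "v \<noteq> x" then show ?thesis using uv f2(1) by (auto simp: f_def inj_on_def)
        next
          assume a: "u = x" "v \<noteq> x"
          then have "f2 v \<noteq> y" using f2(2) uv by (auto simp: N2_def)
          then show ?thesis using a uv by (simp add: f_def)
        next
          assume a: "u \<noteq> x" "v = x"
          then have "f2 u \<noteq> y" using f2(2) uv by (auto simp: N2_def)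
          then show ?thesis using a uv by (simp add: f_def)
        qed simp
      qed
      moreover have "\<forall>z\<in>L. f z \<in> N z" using f2(2) y by (auto simp: f_def N2_def)
      ultimately show ?thesis by blast
    qed
  qed
qed




definition endin :: "('e \<Rightarrow> 'v set) \<Rightarrow> 'v set \<Rightarrow> 'e \<Rightarrow> 'v" where
  "endin ends S e = (THE x. x \<in> ends e \<inter> S)"

locale cbg =
  fixes V :: "'v set" and E :: "'e set" and ends :: "'e \<Rightarrow> 'v set" and A B :: "'v set"
  assumes mg: "multigraph V E ends" and conn: "connected_graph V E ends"
    and cub: "cubic V E ends" and bip: "bipartite_on V E ends A B"
begin

abbreviation "ea \<equiv> endin ends A"
abbreviation "eb \<equiv> endin ends B"

lemma finV: "finite V" and finE: "finite E" and AB: "A \<union> B = V" and AiB: "A \<inter> B = {}"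
  and finA: "finite A" and finB: "finite B"
  using mg bip by (auto simp: multigraph_def bipartite_on_def intro: finite_subset)

lemma swap: "cbg V E ends B A"
  using mg conn cub bip unfolding cbg_def bipartite_on_def by (auto simp: Int_commute Un_commute)

lemma endin_unique: assumes "ends e \<inter> S = {x}" shows "endin ends S e = x"
  unfolding endin_def using assms by auto

lemma ends_split: assumes "e \<in> E"
  shows "ends e = {ea e, eb e}" "ea e \<in> A" "eb e \<in> B" "ea e \<noteq> eb e"
proof -
  have "card (ends e \<inter> A) = 1" "card (ends e \<inter> B) = 1" "ends e \<subseteq> V"
    using assms bip mg by (auto simp: bipartite_on_def multigraph_def)
  then obtain x y where x: "ends e \<inter> A = {x}" and y: "ends e \<inter> B = {y}"
    by (meson card_1_singletonE)
  have ex: "ea e = x" and ey: "eb e = y" using x y by (auto intro: endin_unique)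
  have "ends e = (ends e \<inter> A) \<union> (ends e \<inter> B)" using \<open>ends e \<subseteq> V\<close> AB by blast
  then show "ends e = {ea e, eb e}" using x y ex ey by auto
  show "ea e \<in> A" "eb e \<in> B" using x y ex ey by auto
  show "ea e \<noteq> eb e" using x y ex ey AiB by auto
qed

lemma inA_iff: "e \<in> E \<Longrightarrow> x \<in> A \<Longrightarrow> x \<in> ends e \<longleftrightarrow> ea e = x"
  using ends_split[of e] AiB by auto

lemma inB_iff: "e \<in> E \<Longrightarrow> x \<in> B \<Longrightarrow> x \<in> ends e \<longleftrightarrow> eb e = x"
  using ends_split[of e] AiB by auto

lemma ends_ab: "e \<in> E \<Longrightarrow> a \<in> A \<Longrightarrow> b \<in> B \<Longrightarrow> ends e = {a, b} \<longleftrightarrow> ea e = a \<and> eb e = b"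
  using ends_split[of e] AiB by (auto simp: doubleton_eq_iff)

lemma deg_A: "F \<subseteq> E \<Longrightarrow> v \<in> A \<Longrightarrow> deg F ends v = card {e\<in>F. ea e = v}"
  unfolding deg_def using inA_iff by (metis (no_types, lifting) Collect_cong subsetD)

lemma deg_sum: assumes "F \<subseteq> E" "S \<subseteq> A"
  shows "(\<Sum>v\<in>S. deg F ends v) = card {e\<in>F. ea e \<in> S}"
proof -
  have finF: "finite F" using assms finE finite_subset by blast
  have finS: "finite S" using assms finA finite_subset by blast
  have "(\<Sum>v\<in>S. deg F ends v) = (\<Sum>v\<in>S. card {e\<in>F. ea e = v})"
    using deg_A assms by (intro sum.cong) auto
  also have "\<dots> = card (\<Union>v\<in>S. {e\<in>F. ea e = v})"
    by (rule card_UN_disjoint[symmetric]) (use finS finF in auto)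
  also have "(\<Union>v\<in>S. {e\<in>F. ea e = v}) = {e\<in>F. ea e \<in> S}" by auto
  finally show ?thesis .
qed

lemma balance: assumes "F \<subseteq> E"
  shows "(\<Sum>v\<in>X\<inter>A. deg F ends v) + card {e\<in>F. eb e \<in> X \<and> ea e \<notin> X}
       = (\<Sum>v\<in>X\<inter>B. deg F ends v) + card {e\<in>F. ea e \<in> X \<and> eb e \<notin> X}"
proof -
  have finF: "finite F" using assms finE finite_subset by blast
  have "(\<Sum>v\<in>X\<inter>A. deg F ends v) = card {e\<in>F. ea e \<in> X\<inter>A}" using deg_sum assms by auto
  also have "{e\<in>F. ea e \<in> X\<inter>A} = {e\<in>F. ea e \<in> X \<and> eb e \<in> X} \<union> {e\<in>F. ea e \<in> X \<and> eb e \<notin> X}"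
    using ends_split assms by blast
  also have "card \<dots> = card {e\<in>F. ea e \<in> X \<and> eb e \<in> X} + card {e\<in>F. ea e \<in> X \<and> eb e \<notin> X}"
    by (rule card_Un_disjoint) (use finF in auto)
  finally have 1: "(\<Sum>v\<in>X\<inter>A. deg F ends v) = card {e\<in>F. ea e \<in> X \<and> eb e \<in> X} + card {e\<in>F. ea e \<in> X \<and> eb e \<notin> X}" .
  have "(\<Sum>v\<in>X\<inter>B. deg F ends v) = card {e\<in>F. eb e \<in> X\<inter>B}" using cbg.deg_sum[OF swap] assms by auto
  also have "{e\<in>F. eb e \<in> X\<inter>B} = {e\<in>F. ea e \<in> X \<and> eb e \<in> X} \<union> {e\<in>F. eb e \<in> X \<and> ea e \<notin> X}"
    using ends_split assms by blast
  also have "card \<dots> = card {e\<in>F. ea e \<in> X \<and> eb e \<in> X} + card {e\<in>F. eb e \<in> X \<and> ea e \<notin> X}"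
    by (rule card_Un_disjoint) (use finF in auto)
  finally have 2: "(\<Sum>v\<in>X\<inter>B. deg F ends v) = card {e\<in>F. ea e \<in> X \<and> eb e \<in> X} + card {e\<in>F. eb e \<in> X \<and> ea e \<notin> X}" .
  show ?thesis using 1 2 by simp
qed

lemma cut_M: assumes "M \<subseteq> E"
  shows "cut E ends X \<inter> M = {e\<in>M. ea e \<in> X \<and> eb e \<notin> X} \<union> {e\<in>M. eb e \<in> X \<and> ea e \<notin> X}"
proof -
  have "e \<in> cut E ends X \<longleftrightarrow> (ea e \<in> X \<and> eb e \<notin> X) \<or> (eb e \<in> X \<and> ea e \<notin> X)" if "e \<in> E" for e
  proof -
    have "ends e = {ea e, eb e}" "ea e \<noteq> eb e" using ends_split that by auto
    then show ?thesis unfolding cut_def using that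
      by (cases "ea e \<in> X"; cases "eb e \<in> X") (auto simp: Int_insert_left)
  qed
  then show ?thesis using assms by blast
qed

lemma card_cut_M: assumes "M \<subseteq> E"
  shows "card (cut E ends X \<inter> M) = card {e\<in>M. ea e \<in> X \<and> eb e \<notin> X} + card {e\<in>M. eb e \<in> X \<and> ea e \<notin> X}"
proof -
  have finM: "finite M" using assms finE finite_subset by blast
  show ?thesis unfolding cut_M[OF assms] by (rule card_Un_disjoint) (use finM in auto)
qed

lemma cut_eq: "cut E ends X = {e\<in>E. ea e \<in> X \<and> eb e \<notin> X} \<union> {e\<in>E. eb e \<in> X \<and> ea e \<notin> X}"
proof -
  have "cut E ends X \<inter> E = cut E ends X" by (auto simp: cut_def)
  then show ?thesis using cut_M[of E X] by simp
qed

lemma card_cut: "card (cut E ends X) = card {e\<in>E. ea e \<in> X \<and> eb e \<notin> X} + card {e\<in>E. eb e \<in> X \<and> ea e \<notin> X}"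
proof -
  have "cut E ends X \<inter> E = cut E ends X" by (auto simp: cut_def)
  then show ?thesis using card_cut_M[of E X] by simp
qed

lemma sum_deg_E: "S \<subseteq> V \<Longrightarrow> (\<Sum>v\<in>S. deg E ends v) = 3 * card S"
  using cub unfolding cubic_def by (simp add: subset_iff)

lemma cardAB: "card A = card B"
proof -
  have "(\<Sum>v\<in>V\<inter>A. deg E ends v) + card {e\<in>E. eb e \<in> V \<and> ea e \<notin> V}
       = (\<Sum>v\<in>V\<inter>B. deg E ends v) + card {e\<in>E. ea e \<in> V \<and> eb e \<notin> V}" by (rule balance) simp
  moreover have "{e\<in>E. eb e \<in> V \<and> ea e \<notin> V} = {}" "{e\<in>E. ea e \<in> V \<and> eb e \<notin> V} = {}"
    using ends_split AB by auto
  moreover have "V \<inter> A = A" "V \<inter> B = B" using AB by auto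
  moreover have "A \<subseteq> V" "B \<subseteq> V" using AB by auto
  ultimately show ?thesis using sum_deg_E[of A] sum_deg_E[of B] by simp
qed

lemma conn_closed: assumes "cut E ends X = {}" "u \<in> X" "u \<in> V" "v \<in> V" shows "v \<in> X"
proof -
  have "(u, v) \<in> (adj_rel V E ends)\<^sup>*" using conn assms by (auto simp: connected_graph_def)
  then show ?thesis
  proof (induction rule: rtrancl_induct)
    case base then show ?case using assms by simp
  next
    case (step y z)
    then obtain e where e: "e \<in> E" "ends e = {y, z}" by (auto simp: adj_rel_def)
    have "card (ends e) = 2" using e mg by (auto simp: multigraph_def)
    then have "y \<noteq> z" using e by auto
    have "e \<notin> cut E ends X" using assms by simp
    then have "card ({y, z} \<inter> X) \<noteq> 1" using e by (simp add: cut_def)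
    then show ?case using step.IH \<open>y \<noteq> z\<close> by (cases "z \<in> X") auto
  qed
qed

end



context cbg begin

lemma in_ends: "e \<in> E \<Longrightarrow> v \<in> ends e \<longleftrightarrow> v = ea e \<or> v = eb e"
  using ends_split[of e] by auto

lemma bij_matching:
  assumes "L \<subseteq> A" "R \<subseteq> B" "bij_betw f L R" "\<forall>x\<in>L. \<exists>e\<in>E. ea e = x \<and> eb e = f x"
  shows "\<exists>M. M \<subseteq> E \<and> (\<forall>e\<in>M. ea e \<in> L \<and> eb e \<in> R) \<and> (\<forall>v\<in>L \<union> R. card {e\<in>M. v \<in> ends e} = 1)"
proof -
  define g where "g x = (SOME e. e \<in> E \<and> ea e = x \<and> eb e = f x)" for x
  have g: "g x \<in> E \<and> ea (g x) = x \<and> eb (g x) = f x" if "x \<in> L" for x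
    unfolding g_def using assms(4) that by (smt (verit) someI_ex)
  define M where "M = g ` L"
  have ME: "M \<subseteq> E" using g by (auto simp: M_def)
  have fR: "f x \<in> R" if "x \<in> L" for x using assms(3) that by (auto simp: bij_betw_def)
  have MLR: "\<forall>e\<in>M. ea e \<in> L \<and> eb e \<in> R" using g fR by (auto simp: M_def)
  have "card {e\<in>M. v \<in> ends e} = 1" if v: "v \<in> L \<union> R" for v
  proof (cases "v \<in> L")
    case True
    have "{e\<in>M. v \<in> ends e} = {g v}"
    proof
      show "{e\<in>M. v \<in> ends e} \<subseteq> {g v}"
      proof
        fix e assume "e \<in> {e\<in>M. v \<in> ends e}"
        then obtain x where x: "x \<in> L" "e = g x" "v \<in> ends e" by (auto simp: M_def)
        then have "ea e = v" using inA_iff[of e v] g[of x] True assms(1) by auto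
        then show "e \<in> {g v}" using g[of x] x by auto
      qed
      show "{g v} \<subseteq> {e\<in>M. v \<in> ends e}" using g[OF True] True in_ends[of "g v" v] by (auto simp: M_def)
    qed
    then show ?thesis by simp
  next
    case False
    then have "v \<in> R" using v by auto
    then obtain x0 where x0: "x0 \<in> L" "f x0 = v" using assms(3) by (auto simp: bij_betw_def)
    have "{e\<in>M. v \<in> ends e} = {g x0}"
    proof
      show "{e\<in>M. v \<in> ends e} \<subseteq> {g x0}"
      proof
        fix e assume "e \<in> {e\<in>M. v \<in> ends e}"
        then obtain x where x: "x \<in> L" "e = g x" "v \<in> ends e" by (auto simp: M_def)
        then have "eb e = v" using inB_iff[of e v] g[of x] \<open>v \<in> R\<close> assms(2) by auto
        then have "f x = f x0" using g[of x] x x0 by auto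
        then have "x = x0" using assms(3) x x0 by (auto simp: bij_betw_def inj_on_def)
        then show "e \<in> {g x0}" using x by auto
      qed
      show "{g x0} \<subseteq> {e\<in>M. v \<in> ends e}" using g[OF x0(1)] x0 in_ends[of "g x0" v] by (auto simp: M_def)
    qed
    then show ?thesis by simp
  qed
  then show ?thesis using ME MLR by blast
qed

lemma sum_deg_pm: "perfect_matching V E ends M \<Longrightarrow> S \<subseteq> V \<Longrightarrow> (\<Sum>v\<in>S. deg M ends v) = card S"
  unfolding perfect_matching_def by (simp add: subset_iff)

lemma pm_edge: assumes "e \<in> E" shows "\<exists>M. perfect_matching V E ends M \<and> e \<in> M"
proof -
  define x where "x = ea e"
  define y where "y = eb e"
  have xA: "x \<in> A" and yB: "y \<in> B" using ends_split assms x_def y_def by auto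
  define L where "L = A - {x}"
  define R where "R = B - {y}"
  define N where "N z = eb ` {e'\<in>E. ea e' = z} \<inter> R" for z
  have hallc: "\<forall>T\<subseteq>L. card T \<le> card (\<Union>(N ` T))"
  proof (intro allI impI)
    fix T assume T: "T \<subseteq> L"
    define NT where "NT = eb ` {e'\<in>E. ea e' \<in> T}"
    have U: "\<Union>(N ` T) = NT - {y}" using ends_split by (auto simp: N_def NT_def R_def)
    have TV: "T \<subseteq> A" using T L_def by auto
    have NTB: "NT \<subseteq> B" using ends_split by (auto simp: NT_def)
    have finNT: "finite NT" using NTB finB finite_subset by blast
    define ET where "ET = {e'\<in>E. ea e' \<in> T}"
    define EN where "EN = {e'\<in>E. eb e' \<in> NT}"
    have cET: "card ET = 3 * card T" using deg_sum[of E T] sum_deg_E[of T] TV AB by (auto simp: ET_def)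
    have cEN: "card EN = 3 * card NT" using cbg.deg_sum[OF swap, of E NT] sum_deg_E[of NT] NTB AB by (auto simp: EN_def)
    have sub: "ET \<subseteq> EN" by (auto simp: ET_def EN_def NT_def)
    have finEN: "finite EN" using finE by (auto simp: EN_def)
    have le: "card ET \<le> card EN" using sub finEN card_mono by blast
    show "card T \<le> card (\<Union>(N ` T))"
    proof (rule ccontr)
      assume "\<not> ?thesis"
      then have lt: "card (NT - {y}) < card T" using U by simp
      have TN: "card T \<le> card NT" using le cET cEN by simp
      have yNT: "y \<in> NT"
      proof (rule ccontr)
        assume "y \<notin> NT" then have "NT - {y} = NT" by simp
        then show False using lt TN by simp
      qed
      then have "card (NT - {y}) = card NT - 1" using finNT by simp
      then have "card NT = card T" using lt TN by linarith
      then have "ET = EN" using card_subset_eq[OF finEN sub] cET cEN by simp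
      moreover have "e \<in> EN" using assms yNT y_def by (auto simp: EN_def)
      ultimately have "x \<in> T" using x_def by (auto simp: ET_def)
      then show False using T L_def by auto
    qed
  qed
  have finL: "finite L" using finA L_def by auto
  have "\<forall>z\<in>L. finite (N z)" using finB R_def N_def by auto
  then obtain f where f: "inj_on f L" "\<forall>z\<in>L. f z \<in> N z" using hall[OF finL _ hallc] by blast
  have fLR: "f ` L \<subseteq> R" using f(2) N_def by auto
  have "card (f ` L) = card L" using f(1) card_image by blast
  also have "card L = card R" using xA yB cardAB finA finB by (simp add: L_def R_def)
  finally have "f ` L = R" using card_subset_eq[OF _ fLR] finB R_def by simp
  then have bij: "bij_betw f L R" using f(1) by (simp add: bij_betw_def)
  have adj: "\<forall>z\<in>L. \<exists>e\<in>E. ea e = z \<and> eb e = f z" using f(2) by (force simp: N_def)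
  obtain M0 where M0: "M0 \<subseteq> E" "\<forall>e\<in>M0. ea e \<in> L \<and> eb e \<in> R" "\<forall>v\<in>L \<union> R. card {e\<in>M0. v \<in> ends e} = 1"
    using bij_matching[OF _ _ bij adj] L_def R_def by auto
  define M where "M = insert e M0"
  have "deg M ends v = 1" if v: "v \<in> V" for v
  proof (cases "v = x \<or> v = y")
    case True
    have "{e'\<in>M. v \<in> ends e'} = {e}"
    proof -
      have "v \<notin> ends e'" if "e' \<in> M0" for e'
        using that M0 True in_ends[of e' v] xA yB AiB L_def R_def by auto
      moreover have "v \<in> ends e" using True in_ends assms x_def y_def by auto
      ultimately show ?thesis by (auto simp: M_def)
    qed
    then show ?thesis by (simp add: deg_def)
  next
    case False
    then have "v \<in> L \<union> R" using v AB L_def R_def by auto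
    moreover have "v \<notin> ends e" using False in_ends assms x_def y_def by auto
    then have "{e'\<in>M. v \<in> ends e'} = {e'\<in>M0. v \<in> ends e'}" by (auto simp: M_def)
    ultimately show ?thesis using M0(3) by (simp add: deg_def)
  qed
  then have "perfect_matching V E ends M" using M0(1) assms by (auto simp: perfect_matching_def M_def)
  then show ?thesis by (auto simp: M_def)
qed

end



context cbg begin

lemma sum_deg_F: assumes "ab_matching V E ends a b F" "S \<subseteq> V" "a \<noteq> b"
  shows "(\<Sum>v\<in>S. deg F ends v) = card S + 2 * card (S \<inter> {a, b})"
proof -
  have finS: "finite S" using assms finV finite_subset by blast
  have "(\<Sum>v\<in>S. deg F ends v) = (\<Sum>v\<in>S \<inter> {a,b}. deg F ends v) + (\<Sum>v\<in>S - {a,b}. deg F ends v)"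
    by (rule sum.Int_Diff[OF finS])
  also have "(\<Sum>v\<in>S \<inter> {a,b}. deg F ends v) = (\<Sum>v\<in>S \<inter> {a,b}. 3)"
    using assms(1) by (intro sum.cong) (auto simp: ab_matching_def)
  also have "(\<Sum>v\<in>S - {a,b}. deg F ends v) = (\<Sum>v\<in>S - {a,b}. 1)"
    using assms(1,2) by (intro sum.cong) (auto simp: ab_matching_def)
  finally have "(\<Sum>v\<in>S. deg F ends v) = 3 * card (S \<inter> {a,b}) + card (S - {a,b})" by simp
  moreover have "card S = card (S \<inter> {a,b}) + card (S - {a,b})"
    using card_Int_Diff[OF finS] by blast
  ultimately show ?thesis by simp
qed

lemma fin_sub: "finite {e\<in>F. P e}" if "F \<subseteq> E" for F P
  by (rule finite_subset[of _ E]) (use that finE in auto)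

lemma card_ge1: "finite S \<Longrightarrow> x \<in> S \<Longrightarrow> 1 \<le> card S"
  using card_gt_0_iff[of S] by (auto simp: Suc_le_eq)

lemma cut_compl: "X \<subseteq> V \<Longrightarrow> cut E ends (V - X) = cut E ends X"
  unfolding cut_eq using ends_split AB by auto

lemma arith3: "(3::nat) * p + l = 3 * q + m \<Longrightarrow> m + l = 2 \<Longrightarrow> m \<ge> 1 \<Longrightarrow> m = 1 \<and> l = 1 \<and> p = q"
  by presburger

lemma p1_not:
  assumes aA: "a \<in> A" and bB: "b \<in> B" and eab: "{e'\<in>E. ends e' = {a, b}} = {e}"
    and tc: "two_cut V E ends C" and eC: "e \<in> C" and F: "ab_matching V E ends a b F"
  shows False
proof -
  have eE: "e \<in> E" using eab by blast
  have "ends e = {a, b}" using eab by blast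
  then have eae: "ea e = a" and ebe: "eb e = b" using ends_ab[OF eE aA bB] by auto
  obtain X where X: "X \<subseteq> V" "C = cut E ends X" "card C = 2" using tc unfolding two_cut_def by blast
  obtain Y where Y: "Y \<subseteq> V" "C = cut E ends Y" "a \<in> Y"
  proof (cases "a \<in> X")
    case True then show ?thesis using that X by blast
  next
    case False
    have "V - X \<subseteq> V" "C = cut E ends (V - X)" "a \<in> V - X" using X cut_compl[of X] aA AB False by auto
    then show ?thesis using that by blast
  qed
  have "e \<in> cut E ends Y" using eC Y by simp
  then have bY: "b \<notin> Y" using Y(3) eae ebe unfolding cut_eq by blast
  define lA where "lA = {e\<in>E. ea e \<in> Y \<and> eb e \<notin> Y}"
  define lB where "lB = {e\<in>E. eb e \<in> Y \<and> ea e \<notin> Y}"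
  have c2: "card lA + card lB = 2" using card_cut[of Y] X(3) Y(2) unfolding lA_def lB_def by simp
  have "e \<in> lA" using eE eae ebe Y bY by (simp add: lA_def)
  have finlA: "finite lA" unfolding lA_def by (rule fin_sub) simp
  have "card lA \<ge> 1" using card_ge1[OF finlA \<open>e \<in> lA\<close>] .
  have bal: "3 * card (Y \<inter> A) + card lB = 3 * card (Y \<inter> B) + card lA"
  proof -
    have "Y \<inter> A \<subseteq> V" "Y \<inter> B \<subseteq> V" using Y(1) by auto
    then show ?thesis using balance[of E Y] sum_deg_E[of "Y \<inter> A"] sum_deg_E[of "Y \<inter> B"] by (simp add: lA_def lB_def)
  qed
  have ar: "card lA = 1 \<and> card lB = 1 \<and> card (Y \<inter> A) = card (Y \<inter> B)"
    using arith3[OF bal c2 \<open>card lA \<ge> 1\<close>] .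
  then obtain z where "lA = {z}" using card_1_singletonE by blast
  then have lAe: "lA = {e}" using \<open>e \<in> lA\<close> by simp
  have FE: "F \<subseteq> E" using F by (simp add: ab_matching_def)
  have balF: "(\<Sum>v\<in>Y\<inter>A. deg F ends v) + card {e\<in>F. eb e \<in> Y \<and> ea e \<notin> Y}
       = (\<Sum>v\<in>Y\<inter>B. deg F ends v) + card {e\<in>F. ea e \<in> Y \<and> eb e \<notin> Y}" by (rule balance[OF FE])
  have ab: "a \<noteq> b" using aA bB AiB by auto
  have "(\<Sum>v\<in>Y\<inter>A. deg F ends v) = card (Y \<inter> A) + 2"
  proof -
    have "Y \<inter> A \<inter> {a, b} = {a}" using aA bB Y bY AiB by auto
    moreover have "Y \<inter> A \<subseteq> V" using Y by auto
    ultimately show ?thesis using sum_deg_F[OF F _ ab, of "Y \<inter> A"] by simp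
  qed
  moreover have "(\<Sum>v\<in>Y\<inter>B. deg F ends v) = card (Y \<inter> B)"
  proof -
    have "Y \<inter> B \<inter> {a, b} = {}" using aA bB Y bY AiB by auto
    moreover have "Y \<inter> B \<subseteq> V" using Y by auto
    ultimately show ?thesis using sum_deg_F[OF F _ ab, of "Y \<inter> B"] by simp
  qed
  moreover have "card {e\<in>F. ea e \<in> Y \<and> eb e \<notin> Y} \<le> 1"
  proof -
    have "{e\<in>F. ea e \<in> Y \<and> eb e \<notin> Y} \<subseteq> {e}" using FE lAe unfolding lA_def by blast
    then show ?thesis using card_mono[of "{e}"] by simp
  qed
  ultimately show False using balF ar by linarith
qed

lemma good_P2:
  assumes aA: "a \<in> A" and bB: "b \<in> B" and X: "X \<subseteq> V" "a \<in> X" "b \<notin> X"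
    and cX: "card (X \<inter> B) = card (X \<inter> A) + 1" and cl: "\<forall>e\<in>E. ea e \<in> X \<longrightarrow> eb e \<in> X"
  shows "odd (card X) \<and> tight_cut V E ends (cut E ends X) \<and> a \<in> minus_side A B X \<and> b \<in> minus_side A B (V - X)"
proof -
  have finX: "finite X" using X finV finite_subset by blast
  have "X = (X \<inter> A) \<union> (X \<inter> B)" using X AB by auto
  then have "card X = card (X \<inter> A) + card (X \<inter> B)"
    using card_Un_disjoint[of "X \<inter> A" "X \<inter> B"] finX AiB by auto
  then have odd: "odd (card X)" using cX by simp
  have tight: "tight_cut V E ends (cut E ends X)"
    unfolding tight_cut_def
  proof (intro conjI allI impI)
    show "\<exists>Y\<subseteq>V. cut E ends X = cut E ends Y" using X by blast
  next
    fix M assume M: "perfect_matching V E ends M"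
    have ME: "M \<subseteq> E" using M by (simp add: perfect_matching_def)
    have bal: "(\<Sum>v\<in>X\<inter>A. deg M ends v) + card {e\<in>M. eb e \<in> X \<and> ea e \<notin> X}
       = (\<Sum>v\<in>X\<inter>B. deg M ends v) + card {e\<in>M. ea e \<in> X \<and> eb e \<notin> X}" by (rule balance[OF ME])
    have e0: "{e\<in>M. ea e \<in> X \<and> eb e \<notin> X} = {}" using cl ME by auto
    have c0: "card {e\<in>M. ea e \<in> X \<and> eb e \<notin> X} = 0" by (simp only: e0 card.empty)
    have s1: "(\<Sum>v\<in>X\<inter>A. deg M ends v) = card (X \<inter> A)" "(\<Sum>v\<in>X\<inter>B. deg M ends v) = card (X \<inter> B)"
      using sum_deg_pm[OF M, of "X \<inter> A"] sum_deg_pm[OF M, of "X \<inter> B"] X(1) by auto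
    have "card {e\<in>M. eb e \<in> X \<and> ea e \<notin> X} = 1" using bal cX c0 s1 by linarith
    then show "card (cut E ends X \<inter> M) = 1" using card_cut_M[OF ME, of X] c0 by linarith
  qed
  have m1: "a \<in> minus_side A B X" using cX aA X by (simp add: minus_side_def)
  have "(V - X) \<inter> A = A - (X \<inter> A)" "(V - X) \<inter> B = B - (X \<inter> B)" using AB by auto
  then have "card ((V - X) \<inter> A) = card A - card (X \<inter> A)" "card ((V - X) \<inter> B) = card B - card (X \<inter> B)"
    using finA finB by (auto simp: card_Diff_subset)
  moreover have "card (X \<inter> B) \<le> card B" by (rule card_mono[OF finB]) auto
  ultimately have "\<not> card ((V - X) \<inter> A) < card ((V - X) \<inter> B)" using cardAB cX by linarith
  then have m2: "b \<in> minus_side A B (V - X)" using bB X AB by (auto simp: minus_side_def)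
  show ?thesis using odd tight m1 m2 by blast
qed

lemma good_swap:
  assumes aA: "a \<in> A" and bB: "b \<in> B" and X: "X \<subseteq> V" "b \<in> X" "a \<notin> X"
    and cX: "card (X \<inter> A) = card (X \<inter> B) + 1" and cl: "\<forall>e\<in>E. eb e \<in> X \<longrightarrow> ea e \<in> X"
  shows "V - X \<subseteq> V \<and> a \<in> V - X \<and> b \<notin> V - X \<and> card ((V - X) \<inter> B) = card ((V - X) \<inter> A) + 1
    \<and> (\<forall>e\<in>E. ea e \<in> V - X \<longrightarrow> eb e \<in> V - X)"
proof -
  have "(V - X) \<inter> A = A - (X \<inter> A)" "(V - X) \<inter> B = B - (X \<inter> B)" using AB by auto
  then have "card ((V - X) \<inter> A) = card A - card (X \<inter> A)" "card ((V - X) \<inter> B) = card B - card (X \<inter> B)"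
    using finA finB by (auto simp: card_Diff_subset)
  moreover have "card (X \<inter> A) \<le> card A" by (rule card_mono[OF finA]) auto
  ultimately have "card ((V - X) \<inter> B) = card ((V - X) \<inter> A) + 1" using cardAB cX by linarith
  moreover have "\<forall>e\<in>E. ea e \<in> V - X \<longrightarrow> eb e \<in> V - X" using cl ends_split AB by blast
  ultimately show ?thesis using aA AB X by auto
qed

lemma p2_not:
  assumes aA: "a \<in> A" and bB: "b \<in> B" and X: "X \<subseteq> V"
    and tc: "tight_cut V E ends (cut E ends X)"
    and ma: "a \<in> minus_side A B X" and mb: "b \<in> minus_side A B (V - X)"
    and F: "ab_matching V E ends a b F"
  shows False
proof -
  have aX: "a \<in> X" and lt: "card (X \<inter> A) < card (X \<inter> B)"
    using ma aA AiB by (auto simp: minus_side_def split: if_splits)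
  have bX: "b \<notin> X" using mb by (auto simp: minus_side_def split: if_splits)
  have ab: "a \<noteq> b" using aA bB AiB by auto
  have tightM: "card (cut E ends X \<inter> M) = 1" if "perfect_matching V E ends M" for M
    using tc that by (simp add: tight_cut_def)
  have balM: "card (X \<inter> A) + card {e\<in>M. eb e \<in> X \<and> ea e \<notin> X} = card (X \<inter> B) + card {e\<in>M. ea e \<in> X \<and> eb e \<notin> X}"
    and cM: "card {e\<in>M. ea e \<in> X \<and> eb e \<notin> X} + card {e\<in>M. eb e \<in> X \<and> ea e \<notin> X} = 1"
    if M: "perfect_matching V E ends M" for M
  proof -
    have ME: "M \<subseteq> E" using M by (simp add: perfect_matching_def)
    show "card (X \<inter> A) + card {e\<in>M. eb e \<in> X \<and> ea e \<notin> X} = card (X \<inter> B) + card {e\<in>M. ea e \<in> X \<and> eb e \<notin> X}"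
    proof -
      have "X \<inter> A \<subseteq> V" "X \<inter> B \<subseteq> V" using X by auto
      then show ?thesis using balance[OF ME, of X] sum_deg_pm[OF M, of "X \<inter> A"] sum_deg_pm[OF M, of "X \<inter> B"] by simp
    qed
    show "card {e\<in>M. ea e \<in> X \<and> eb e \<notin> X} + card {e\<in>M. eb e \<in> X \<and> ea e \<notin> X} = 1"
      using card_cut_M[OF ME, of X] tightM[OF M] by simp
  qed
  have "deg E ends a = 3" using cub aA AB by (auto simp: cubic_def)
  then have "{e\<in>E. a \<in> ends e} \<noteq> {}" unfolding deg_def by (intro notI) simp
  then obtain e0 where "e0 \<in> E" by blast
  then obtain M0 where M0: "perfect_matching V E ends M0" using pm_edge by blast
  have cXB: "card (X \<inter> B) = card (X \<inter> A) + 1" using balM[OF M0] cM[OF M0] lt by linarith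
  have FE: "F \<subseteq> E" using F by (simp add: ab_matching_def)
  have "(\<Sum>v\<in>X\<inter>A. deg F ends v) = card (X \<inter> A) + 2"
  proof -
    have "X \<inter> A \<inter> {a, b} = {a}" using aA bB aX bX AiB by auto
    then show ?thesis using sum_deg_F[OF F _ ab, of "X \<inter> A"] X by auto
  qed
  moreover have "(\<Sum>v\<in>X\<inter>B. deg F ends v) = card (X \<inter> B)"
  proof -
    have "X \<inter> B \<inter> {a, b} = {}" using aA bB aX bX AiB by auto
    then show ?thesis using sum_deg_F[OF F _ ab, of "X \<inter> B"] X by auto
  qed
  ultimately have "card {e\<in>F. ea e \<in> X \<and> eb e \<notin> X} \<ge> 1"
    using balance[OF FE, of X] cXB by linarith
  then obtain e where e: "e \<in> F" "ea e \<in> X" "eb e \<notin> X"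
  proof -
    have "{e\<in>F. ea e \<in> X \<and> eb e \<notin> X} \<noteq> {}" using \<open>card {e\<in>F. ea e \<in> X \<and> eb e \<notin> X} \<ge> 1\<close> by (intro notI) simp
    then show ?thesis using that by blast
  qed
  obtain M where M: "perfect_matching V E ends M" "e \<in> M" using pm_edge e FE by blast
  have ME: "M \<subseteq> E" using M by (simp add: perfect_matching_def)
  have "e \<in> {e\<in>M. ea e \<in> X \<and> eb e \<notin> X}" using e M by auto
  then have "card {e\<in>M. ea e \<in> X \<and> eb e \<notin> X} \<ge> 1"
    by (rule card_ge1[OF fin_sub[OF ME]])
  then show False using balM[OF M(1)] cM[OF M(1)] cXB by linarith
qed

end



lemma arith4: "(3::nat) * (t + 1) + l = 3 * n + k \<Longrightarrow> n + k \<le> t + 2 \<Longrightarrow>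
   (k = 0 \<and> l = 0) \<or> (k = 0 \<and> n = t + 2) \<or> (k = 1 \<and> l = 1)"
  by presburger

context cbg begin

lemma deficient:
  assumes aA: "a \<in> A" and bB: "b \<in> B" and T: "T \<subseteq> A - {a}"
    and nb: "\<forall>e\<in>E. ea e \<in> T \<longrightarrow> eb e \<noteq> b"
    and dc: "card (eb ` {e\<in>E. ea e \<in> insert a T} - {b}) + card {e\<in>E. ea e = a \<and> eb e = b} \<le> card T + 2"
  shows "(card {e\<in>E. ea e = a \<and> eb e = b} = 0 \<and> (\<exists>X. X \<subseteq> V \<and> a \<in> X \<and> b \<notin> X \<and>
            card (X \<inter> B) = card (X \<inter> A) + 1 \<and> (\<forall>e\<in>E. ea e \<in> X \<longrightarrow> eb e \<in> X)))
      \<or> (\<exists>e. {e\<in>E. ea e = a \<and> eb e = b} = {e} \<and> (\<exists>C. two_cut V E ends C \<and> e \<in> C))"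
proof -
  define NB where "NB = eb ` {e\<in>E. ea e \<in> insert a T} - {b}"
  define Eab where "Eab = {e\<in>E. ea e = a \<and> eb e = b}"
  define X where "X = insert a T \<union> NB"
  have NBB: "NB \<subseteq> B" using ends_split by (auto simp: NB_def)
  have XA: "X \<inter> A = insert a T" using NBB AiB T aA by (auto simp: X_def)
  have XB: "X \<inter> B = NB" using NBB AiB T aA by (auto simp: X_def)
  have XV: "X \<subseteq> V" using NBB T aA AB by (auto simp: X_def)
  have bX: "b \<notin> X" using aA bB AiB T by (auto simp: X_def NB_def)
  have aX: "a \<in> X" by (simp add: X_def)
  have finT: "finite T" using T finA finite_subset by blast
  have aT: "a \<notin> T" using T by auto
  have cXA: "card (X \<inter> A) = card T + 1" using XA finT aT by simp
  define lA where "lA = {e\<in>E. ea e \<in> X \<and> eb e \<notin> X}"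
  define lB where "lB = {e\<in>E. eb e \<in> X \<and> ea e \<notin> X}"
  have lAeq: "lA = Eab"
  proof
    show "lA \<subseteq> Eab"
    proof
      fix e assume e: "e \<in> lA"
      then have eE: "e \<in> E" and x: "ea e \<in> X" and y: "eb e \<notin> X" by (auto simp: lA_def)
      have "ea e \<in> insert a T" using x ends_split[OF eE] XA by auto
      then have "eb e \<in> eb ` {e\<in>E. ea e \<in> insert a T}" using eE by blast
      then have ebb: "eb e = b" using y by (auto simp: X_def NB_def)
      then have "ea e \<notin> T" using nb eE by auto
      then have "ea e = a" using \<open>ea e \<in> insert a T\<close> by auto
      then show "e \<in> Eab" using ebb eE by (simp add: Eab_def)
    qed
    show "Eab \<subseteq> lA" using aX bX by (auto simp: Eab_def lA_def)
  qed
  have bal: "3 * card (X \<inter> A) + card lB = 3 * card (X \<inter> B) + card lA"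
  proof -
    have "X \<inter> A \<subseteq> V" "X \<inter> B \<subseteq> V" using XV by auto
    then show ?thesis using balance[of E X] sum_deg_E[of "X \<inter> A"] sum_deg_E[of "X \<inter> B"] by (simp add: lA_def lB_def)
  qed
  have cc: "card (cut E ends X) = card lA + card lB" using card_cut[of X] by (simp add: lA_def lB_def)
  have bal2: "3 * (card T + 1) + card lB = 3 * card NB + card Eab" using bal cXA XB lAeq by simp
  have dc2: "card NB + card Eab \<le> card T + 2" using dc by (simp add: NB_def Eab_def)
  from arith4[OF bal2 dc2]
  consider (c0) "card Eab = 0" "card lB = 0" | (c1) "card Eab = 0" "card NB = card T + 2"
    | (c2) "card Eab = 1" "card lB = 1" by argo
  then show ?thesis
  proof cases
    case c0
    then have "card (cut E ends X) = 0" using cc lAeq by simp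
    moreover have "finite (cut E ends X)" unfolding cut_def by (rule fin_sub) simp
    ultimately have "cut E ends X = {}" by simp
    then have "b \<in> X" using conn_closed[of X a b] aX aA bB AB by auto
    then show ?thesis using bX by simp
  next
    case c1
    have "card (X \<inter> B) = card (X \<inter> A) + 1" using c1 cXA XB by simp
    moreover have "\<forall>e\<in>E. ea e \<in> X \<longrightarrow> eb e \<in> X" using lAeq c1(1) finE
      by (auto simp: lA_def Eab_def)
    ultimately show ?thesis using c1 XV aX bX by (auto simp: Eab_def)
  next
    case c2
    then obtain e where e: "Eab = {e}" using card_1_singletonE by blast
    have "card (cut E ends X) = 2" using cc c2 lAeq by simp
    then have "two_cut V E ends (cut E ends X)" using XV by (auto simp: two_cut_def)
    moreover have "e \<in> cut E ends X" using e lAeq cut_eq[of X] by (auto simp: lA_def)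
    ultimately show ?thesis using e by (auto simp: Eab_def)
  qed
qed

lemma nbr_count:
  assumes aA: "a \<in> A" and bB: "b \<in> B"
  shows "card (eb ` {e\<in>E. ea e = a} - {b}) + card {e\<in>E. ea e = a \<and> eb e = b} \<le> 3"
    and "card (eb ` {e\<in>E. ea e = a} - {b}) + card {e\<in>E. ea e = a \<and> eb e = b} = 3 \<Longrightarrow>
         y \<in> eb ` {e\<in>E. ea e = a} - {b} \<Longrightarrow> card {e\<in>E. ea e = a \<and> eb e = y} = 1"
proof -
  define Da where "Da = {e\<in>E. ea e = a}"
  define Do where "Do = {e\<in>E. ea e = a \<and> eb e \<noteq> b}"
  define Eab where "Eab = {e\<in>E. ea e = a \<and> eb e = b}"
  have "deg E ends a = 3" using cub aA AB by (auto simp: cubic_def)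
  then have cDa: "card Da = 3" using deg_A[of E a] aA by (simp add: Da_def)
  have "Da = Eab \<union> Do" by (auto simp: Da_def Eab_def Do_def)
  moreover have "finite Eab" "finite Do" unfolding Eab_def Do_def by (rule fin_sub, simp)+
  moreover have "Eab \<inter> Do = {}" by (auto simp: Eab_def Do_def)
  ultimately have "card Da = card Eab + card Do" using card_Un_disjoint[of Eab Do] by simp
  then have cD: "card Do + card Eab = 3" using cDa by simp
  have img: "eb ` Da - {b} = eb ` Do" by (auto simp: Da_def Do_def)
  have le: "card (eb ` Do) \<le> card Do" using \<open>finite Do\<close> card_image_le by blast
  show "card (eb ` {e\<in>E. ea e = a} - {b}) + card {e\<in>E. ea e = a \<and> eb e = b} \<le> 3"
    using le cD img by (simp add: Da_def Eab_def)
  assume eq: "card (eb ` {e\<in>E. ea e = a} - {b}) + card {e\<in>E. ea e = a \<and> eb e = b} = 3"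
    and y: "y \<in> eb ` {e\<in>E. ea e = a} - {b}"
  have "card (eb ` Do) = card Do" using eq cD img by (simp add: Da_def Eab_def)
  then have inj: "inj_on eb Do" using \<open>finite Do\<close> inj_on_iff_eq_card by blast
  have "y \<in> eb ` Do" using y img unfolding Da_def by blast
  then obtain e0 where e0: "e0 \<in> Do" "eb e0 = y" by blast
  have "{e\<in>E. ea e = a \<and> eb e = y} = {e0}"
  proof
    show "{e0} \<subseteq> {e\<in>E. ea e = a \<and> eb e = y}" using e0 by (auto simp: Do_def)
    show "{e\<in>E. ea e = a \<and> eb e = y} \<subseteq> {e0}"
    proof
      fix e assume e: "e \<in> {e\<in>E. ea e = a \<and> eb e = y}"
      then have "e \<in> Do" using y by (auto simp: Do_def)
      then have "e = e0" using inj e0 e unfolding inj_on_def by auto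
      then show "e \<in> {e0}" by simp
    qed
  qed
  then show "card {e\<in>E. ea e = a \<and> eb e = y} = 1" by simp
qed

end



context cbg begin

lemma construct:
  assumes aA: "a \<in> A" and bB: "b \<in> B"
    and ka: "card (eb ` {e\<in>E. ea e = a} - {b}) + card {e\<in>E. ea e = a \<and> eb e = b} = 3"
    and kb: "card (ea ` {e\<in>E. eb e = b} - {a}) + card {e\<in>E. ea e = a \<and> eb e = b} = 3"
    and hallc: "\<forall>T \<subseteq> A - {a} - (ea ` {e\<in>E. eb e = b} - {a}).
        card T \<le> card (\<Union>z\<in>T. eb ` {e\<in>E. ea e = z} \<inter> (B - {b} - (eb ` {e\<in>E. ea e = a} - {b})))"
  shows "lambda_matchable V E ends a b"
proof -
  define Na where "Na = eb ` {e\<in>E. ea e = a} - {b}"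
  define Nb where "Nb = ea ` {e\<in>E. eb e = b} - {a}"
  define L where "L = A - {a} - Nb"
  define R where "R = B - {b} - Na"
  define N where "N z = eb ` {e\<in>E. ea e = z} \<inter> R" for z
  have NaB: "Na \<subseteq> B" using ends_split by (auto simp: Na_def)
  have NbA: "Nb \<subseteq> A" using ends_split by (auto simp: Nb_def)
  have finL: "finite L" using finA by (simp add: L_def)
  have "\<forall>z\<in>L. finite (N z)" using finB by (simp add: N_def R_def)
  moreover have "\<forall>T\<subseteq>L. card T \<le> card (\<Union>(N ` T))"
  proof (intro allI impI)
    fix T assume "T \<subseteq> L"
    then have "T \<subseteq> A - {a} - (ea ` {e\<in>E. eb e = b} - {a})" unfolding L_def Nb_def .
    then have "card T \<le> card (\<Union>z\<in>T. eb ` {e\<in>E. ea e = z} \<inter> (B - {b} - (eb ` {e\<in>E. ea e = a} - {b})))"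
      using hallc by blast
    moreover have "(\<Union>z\<in>T. eb ` {e\<in>E. ea e = z} \<inter> (B - {b} - (eb ` {e\<in>E. ea e = a} - {b}))) = \<Union>(N ` T)"
      unfolding N_def R_def Na_def ..
    ultimately show "card T \<le> card (\<Union>(N ` T))" by simp
  qed
  ultimately have "\<exists>f. inj_on f L \<and> (\<forall>z\<in>L. f z \<in> N z)" by (rule hall[OF finL])
  then obtain f where f: "inj_on f L" "\<forall>z\<in>L. f z \<in> N z" by blast
  have fLR: "f ` L \<subseteq> R" using f(2) unfolding N_def by blast
  have finNa: "finite Na" using NaB finB finite_subset by blast
  have finNb: "finite Nb" using NbA finA finite_subset by blast
  have cL: "card L = card A - (card Nb + 1)"
  proof -
    have "L = A - insert a Nb" by (auto simp: L_def)
    moreover have "insert a Nb \<subseteq> A" using aA NbA by auto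
    moreover have "a \<notin> Nb" by (simp add: Nb_def)
    ultimately show ?thesis using finNb card_Diff_subset[of "insert a Nb" A] finA by simp
  qed
  have cR: "card R = card B - (card Na + 1)"
  proof -
    have "R = B - insert b Na" by (auto simp: R_def)
    moreover have "insert b Na \<subseteq> B" using bB NaB by auto
    moreover have "b \<notin> Na" by (simp add: Na_def)
    ultimately show ?thesis using finNa card_Diff_subset[of "insert b Na" B] finB by simp
  qed
  have "card (f ` L) = card L" using f(1) card_image by blast
  also have "card L = card R" using cL cR cardAB ka kb by (simp add: Na_def Nb_def)
  finally have "f ` L = R" using card_subset_eq[OF _ fLR] finB R_def by simp
  then have bij: "bij_betw f L R" using f(1) by (simp add: bij_betw_def)
  have adj: "\<forall>z\<in>L. \<exists>e\<in>E. ea e = z \<and> eb e = f z" using f(2) by (force simp: N_def)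
  have LA: "L \<subseteq> A" and RB: "R \<subseteq> B" by (auto simp: L_def R_def)
  obtain M0 where M0: "M0 \<subseteq> E" "\<forall>e\<in>M0. ea e \<in> L \<and> eb e \<in> R" "\<forall>v\<in>L \<union> R. card {e\<in>M0. v \<in> ends e} = 1"
    using bij_matching[OF LA RB bij adj] by blast
  define D where "D = {e\<in>E. ea e = a \<or> eb e = b}"
  define F where "F = M0 \<union> D"
  have FE: "F \<subseteq> E" using M0(1) by (auto simp: F_def D_def)
  have M0v: "v \<notin> ends e" if "e \<in> M0" "v \<notin> L \<union> R" for e v
    using that M0 in_ends[of e v] by auto
  have degab: "deg F ends v = 3" if v: "v = a \<or> v = b" for v
  proof -
    have "{e\<in>F. v \<in> ends e} = {e\<in>E. v \<in> ends e}"
    proof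
      show "{e\<in>F. v \<in> ends e} \<subseteq> {e\<in>E. v \<in> ends e}" using FE by auto
      show "{e\<in>E. v \<in> ends e} \<subseteq> {e\<in>F. v \<in> ends e}"
      proof
        fix e assume e: "e \<in> {e\<in>E. v \<in> ends e}"
        then have "ea e = a \<or> eb e = b" using v inA_iff[of e a] inB_iff[of e b] aA bB by auto
        then show "e \<in> {e\<in>F. v \<in> ends e}" using e by (auto simp: F_def D_def)
      qed
    qed
    moreover have "deg E ends v = 3" using cub v aA bB AB by (auto simp: cubic_def)
    ultimately show ?thesis by (simp add: deg_def)
  qed
  have nbA: "card {e\<in>E. ea e = a \<and> eb e = y} = 1" if "y \<in> Na" for y
    using nbr_count(2)[OF aA bB ka] that by (simp add: Na_def)
  have kb': "card (ea ` {e\<in>E. eb e = b} - {a}) + card {e\<in>E. eb e = b \<and> ea e = a} = 3"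
    using kb by (simp add: conj_commute)
  have nbB: "card {e\<in>E. eb e = b \<and> ea e = x} = 1" if "x \<in> Nb" for x
    using cbg.nbr_count(2)[OF swap bB aA kb'] that by (simp add: Nb_def)
  have degv: "deg F ends v = 1" if v: "v \<in> V - {a, b}" for v
  proof (cases "v \<in> L \<union> R")
    case True
    have "{e\<in>F. v \<in> ends e} = {e\<in>M0. v \<in> ends e}"
    proof -
      have "v \<notin> ends e" if e: "e \<in> D" for e
      proof
        assume ve: "v \<in> ends e"
        have eE: "e \<in> E" using e by (simp add: D_def)
        have "ea e = a \<or> eb e = b" using e by (simp add: D_def)
        then show False
        proof
          assume "ea e = a"
          then have "v = eb e" using ve in_ends[OF eE] v by auto
          then have "v \<in> Na" using eE \<open>ea e = a\<close> v by (auto simp: Na_def)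
          then show False using True NaB AiB by (auto simp: L_def R_def)
        next
          assume "eb e = b"
          then have "v = ea e" using ve in_ends[OF eE] v by auto
          then have "v \<in> Nb" using eE \<open>eb e = b\<close> v by (auto simp: Nb_def)
          then show False using True NbA AiB by (auto simp: L_def R_def)
        qed
      qed
      then show ?thesis by (auto simp: F_def)
    qed
    then show ?thesis using M0(3) True by (simp add: deg_def)
  next
    case False
    have Fv: "{e\<in>F. v \<in> ends e} = {e\<in>D. v \<in> ends e}" using M0v False by (auto simp: F_def)
    have "v \<in> Na \<or> v \<in> Nb" using False v AB by (auto simp: L_def R_def)
    then show ?thesis
    proof
      assume vNa: "v \<in> Na"
      then have vB: "v \<in> B" using NaB by auto
      have "{e\<in>D. v \<in> ends e} = {e\<in>E. ea e = a \<and> eb e = v}"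
      proof
        show "{e\<in>D. v \<in> ends e} \<subseteq> {e\<in>E. ea e = a \<and> eb e = v}"
          using inB_iff vB v by (auto simp: D_def)
        show "{e\<in>E. ea e = a \<and> eb e = v} \<subseteq> {e\<in>D. v \<in> ends e}"
          using in_ends by (auto simp: D_def)
      qed
      then show ?thesis using Fv nbA[OF vNa] by (simp add: deg_def)
    next
      assume vNb: "v \<in> Nb"
      then have vA: "v \<in> A" using NbA by auto
      have "{e\<in>D. v \<in> ends e} = {e\<in>E. eb e = b \<and> ea e = v}"
      proof
        show "{e\<in>D. v \<in> ends e} \<subseteq> {e\<in>E. eb e = b \<and> ea e = v}"
          using inA_iff vA v by (auto simp: D_def)
        show "{e\<in>E. eb e = b \<and> ea e = v} \<subseteq> {e\<in>D. v \<in> ends e}"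
          using in_ends by (auto simp: D_def)
      qed
      then show ?thesis using Fv nbB[OF vNb] by (simp add: deg_def)
    qed
  qed
  have "ab_matching V E ends a b F" using FE degab degv by (simp add: ab_matching_def)
  then show ?thesis by (auto simp: lambda_matchable_def)
qed

end



context cbg begin

lemma dir2:
  assumes aA: "a \<in> A" and bB: "b \<in> B" and nl: "\<not> lambda_matchable V E ends a b"
  shows "(\<exists>e. {e'\<in>E. ends e' = {a, b}} = {e} \<and> (\<exists>C. two_cut V E ends C \<and> e \<in> C)) \<or>
         (\<not> (\<exists>e\<in>E. ends e = {a, b}) \<and> (\<exists>X\<subseteq>V. odd (card X) \<and> tight_cut V E ends (cut E ends X) \<and>
              a \<in> minus_side A B X \<and> b \<in> minus_side A B (V - X)))" (is "?P1 \<or> ?P2")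
proof -
  define Eab where "Eab = {e\<in>E. ea e = a \<and> eb e = b}"
  have Eq: "{e'\<in>E. ends e' = {a,b}} = Eab" using ends_ab aA bB by (auto simp: Eab_def)
  have Eab': "{e\<in>E. eb e = b \<and> ea e = a} = Eab" by (auto simp: Eab_def)
  have finEab: "finite Eab" unfolding Eab_def by (rule fin_sub) simp
  have conv: "?P1 \<or> ?P2" if R: "(card Eab = 0 \<and> (\<exists>X. X \<subseteq> V \<and> a \<in> X \<and> b \<notin> X \<and>
            card (X \<inter> B) = card (X \<inter> A) + 1 \<and> (\<forall>e\<in>E. ea e \<in> X \<longrightarrow> eb e \<in> X)))
      \<or> (\<exists>e. Eab = {e} \<and> (\<exists>C. two_cut V E ends C \<and> e \<in> C))"
  proof (cases "\<exists>e. Eab = {e} \<and> (\<exists>C. two_cut V E ends C \<and> e \<in> C)")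
    case True then show ?thesis using Eq by auto
  next
    case False
    then have k0: "card Eab = 0" and
      "\<exists>X. X \<subseteq> V \<and> a \<in> X \<and> b \<notin> X \<and> card (X \<inter> B) = card (X \<inter> A) + 1 \<and> (\<forall>e\<in>E. ea e \<in> X \<longrightarrow> eb e \<in> X)"
      using R by auto
    then obtain X where X: "X \<subseteq> V" "a \<in> X" "b \<notin> X" "card (X \<inter> B) = card (X \<inter> A) + 1"
      "\<forall>e\<in>E. ea e \<in> X \<longrightarrow> eb e \<in> X" by blast
    have "Eab = {}" using k0 finEab by simp
    then have "\<not> (\<exists>e\<in>E. ends e = {a, b})" using Eq by auto
    moreover have "odd (card X) \<and> tight_cut V E ends (cut E ends X) \<and> a \<in> minus_side A B X \<and> b \<in> minus_side A B (V - X)"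
      using good_P2[OF aA bB X] .
    ultimately show ?thesis using X(1) by blast
  qed
  define Na where "Na = eb ` {e\<in>E. ea e = a} - {b}"
  define Nb where "Nb = ea ` {e\<in>E. eb e = b} - {a}"
  have la: "card Na + card Eab \<le> 3" using nbr_count(1)[OF aA bB] by (simp add: Na_def Eab_def)
  have lb: "card Nb + card Eab \<le> 3" using cbg.nbr_count(1)[OF swap bB aA] Eab' by (simp add: Nb_def)
  show ?thesis
  proof (cases "card Na + card Eab = 3")
    case False
    then have "card (eb ` {e\<in>E. ea e \<in> insert a {}} - {b}) + card {e\<in>E. ea e = a \<and> eb e = b} \<le> card {} + 2"
      using la by (simp add: Na_def Eab_def)
    from deficient[OF aA bB _ _ this] show ?thesis using conv by (simp add: Eab_def)
  next
    case ka: True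
    show ?thesis
    proof (cases "card Nb + card Eab = 3")
      case False
      then have "card (ea ` {e\<in>E. eb e \<in> insert b {}} - {a}) + card {e\<in>E. eb e = b \<and> ea e = a} \<le> card {} + 2"
        using lb Eab' by (simp add: Nb_def)
      from cbg.deficient[OF swap bB aA _ _ this]
      have D: "(card Eab = 0 \<and> (\<exists>X. X \<subseteq> V \<and> b \<in> X \<and> a \<notin> X \<and>
            card (X \<inter> A) = card (X \<inter> B) + 1 \<and> (\<forall>e\<in>E. eb e \<in> X \<longrightarrow> ea e \<in> X)))
        \<or> (\<exists>e. Eab = {e} \<and> (\<exists>C. two_cut V E ends C \<and> e \<in> C))" using Eab' by simp
      show ?thesis
      proof (rule conv)
        show "(card Eab = 0 \<and> (\<exists>X. X \<subseteq> V \<and> a \<in> X \<and> b \<notin> X \<and>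
            card (X \<inter> B) = card (X \<inter> A) + 1 \<and> (\<forall>e\<in>E. ea e \<in> X \<longrightarrow> eb e \<in> X)))
          \<or> (\<exists>e. Eab = {e} \<and> (\<exists>C. two_cut V E ends C \<and> e \<in> C))"
        proof (cases "\<exists>e. Eab = {e} \<and> (\<exists>C. two_cut V E ends C \<and> e \<in> C)")
          case True then show ?thesis by blast
        next
          case False
          then obtain X where "card Eab = 0" "X \<subseteq> V" "b \<in> X" "a \<notin> X" "card (X \<inter> A) = card (X \<inter> B) + 1"
            "\<forall>e\<in>E. eb e \<in> X \<longrightarrow> ea e \<in> X" using D by blast
          from good_swap[OF aA bB this(2-6)] \<open>card Eab = 0\<close> show ?thesis by blast
        qed
      qed
    next
      case kb: True
      have "\<not> (\<forall>T \<subseteq> A - {a} - (ea ` {e\<in>E. eb e = b} - {a}).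
        card T \<le> card (\<Union>z\<in>T. eb ` {e\<in>E. ea e = z} \<inter> (B - {b} - (eb ` {e\<in>E. ea e = a} - {b}))))"
        using construct[OF aA bB] ka kb nl by (auto simp: Na_def Nb_def Eab_def)
      then obtain T where T: "T \<subseteq> A - {a} - Nb"
        and lt: "card (\<Union>z\<in>T. eb ` {e\<in>E. ea e = z} \<inter> (B - {b} - Na)) < card T"
        unfolding Na_def Nb_def by (auto simp: not_le)
      define U where "U = (\<Union>z\<in>T. eb ` {e\<in>E. ea e = z} \<inter> (B - {b} - Na))"
      have T1: "T \<subseteq> A - {a}" using T by auto
      have nb: "\<forall>e\<in>E. ea e \<in> T \<longrightarrow> eb e \<noteq> b"
      proof (intro ballI impI notI)
        fix e assume "e \<in> E" "ea e \<in> T" "eb e = b"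
        then have "ea e \<in> Nb" using T by (auto simp: Nb_def)
        then show False using T \<open>ea e \<in> T\<close> by auto
      qed
      have sub: "eb ` {e\<in>E. ea e \<in> insert a T} - {b} \<subseteq> U \<union> Na"
      proof
        fix y assume "y \<in> eb ` {e\<in>E. ea e \<in> insert a T} - {b}"
        then obtain e where e: "e \<in> E" "ea e \<in> insert a T" "y = eb e" "y \<noteq> b" by blast
        show "y \<in> U \<union> Na"
        proof (cases "ea e = a")
          case True then show ?thesis using e by (auto simp: Na_def)
        next
          case False
          then have "ea e \<in> T" using e by auto
          moreover have "y \<in> B" using e ends_split by auto
          ultimately show ?thesis using e unfolding U_def by blast
        qed
      qed
      have finU: "finite (U \<union> Na)"
      proof -
        have "U \<union> Na \<subseteq> B" using ends_split by (auto simp: U_def Na_def)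
        then show ?thesis using finB finite_subset by blast
      qed
      have "card (eb ` {e\<in>E. ea e \<in> insert a T} - {b}) \<le> card (U \<union> Na)" using card_mono[OF finU sub] .
      also have "\<dots> \<le> card U + card Na" by (rule card_Un_le)
      finally have "card (eb ` {e\<in>E. ea e \<in> insert a T} - {b}) + card {e\<in>E. ea e = a \<and> eb e = b} \<le> card T + 2"
        using lt ka unfolding U_def Eab_def by linarith
      from deficient[OF aA bB T1 nb this] show ?thesis using conv by (simp add: Eab_def)
    qed
  qed
qed

end

theorem lemma2p4:
  fixes V A B :: "'v set" and E :: "'e set" and ends :: "'e \<Rightarrow> 'v set"
    and a b :: 'v
  assumes "multigraph V E ends"
    and "connected_graph V E ends"
    and "cubic V E ends"
    and "bipartite_on V E ends A B"
    and "a \<in> A" and "b \<in> B"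
  shows "\<not> lambda_matchable V E ends a b \<longleftrightarrow>
    (let P1 = (\<exists>e. {e'\<in>E. ends e' = {a, b}} = {e} \<and>
                  (\<exists>C. two_cut V E ends C \<and> e \<in> C));
         P2 = (\<not> (\<exists>e\<in>E. ends e = {a, b}) \<and>
               (\<exists>X\<subseteq>V. odd (card X) \<and> tight_cut V E ends (cut E ends X) \<and>
                   a \<in> minus_side A B X \<and> b \<in> minus_side A B (V - X)))
     in (P1 \<and> \<not> P2) \<or> (P2 \<and> \<not> P1))"
proof -
  interpret cbg V E ends A B using assms(1-4) by (rule cbg.intro)
  let ?P1 = "\<exists>e. {e'\<in>E. ends e' = {a, b}} = {e} \<and> (\<exists>C. two_cut V E ends C \<and> e \<in> C)"
  let ?P2 = "\<not> (\<exists>e\<in>E. ends e = {a, b}) \<and>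
               (\<exists>X\<subseteq>V. odd (card X) \<and> tight_cut V E ends (cut E ends X) \<and>
                   a \<in> minus_side A B X \<and> b \<in> minus_side A B (V - X))"
  have ex: "?P1 \<Longrightarrow> \<not> ?P2" by blast
  have d1: "?P1 \<Longrightarrow> \<not> lambda_matchable V E ends a b"
    using p1_not[OF assms(5,6)] unfolding lambda_matchable_def by blast
  have d2: "?P2 \<Longrightarrow> \<not> lambda_matchable V E ends a b"
    using p2_not[OF assms(5,6)] unfolding lambda_matchable_def by blast
  have d3: "\<not> lambda_matchable V E ends a b \<Longrightarrow> ?P1 \<or> ?P2" using dir2[OF assms(5,6)] by blast
  show ?thesis unfolding Let_def using ex d1 d2 d3 by blast
qed



end
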